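(* Let $A$ be a C*-algebra and $A_1,A_2\subset A$ two C*-subalgebras. Then $A_1$ and $A_2$ mutually commute in $A$ (every element of $A_1$ commutes with every element of $A_2$) if and only if the monotone map $$r: C(A)\to C(A_1)\times C(A_2),\qquad C\mapsto (C\cap A_1,\,C\cap A_2)$$ has a left adjoint.
   Context: All C*-algebras are unital and subalgebras contain the unit. For a C*-algebra $B$, $C(B)$ denotes the poset of commutative C*-subalgebras of $B$ ordered by inclusion; $C(A_1)\times C(A_2)$ carries the product order. Posets are regarded as categories, so adjoints are Galois connections. *)

theory Defs
  imports "HOL-Analysis.Analysis"
begin

class cstar_algebra = real_normed_algebra_1 + banach +
  fixes scaleC :: "complex \<Rightarrow> 'a \<Rightarrow> 'a"
    and star :: "'a \<Rightarrow> 'a"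
  assumes scaleC_add_right: "scaleC a (x + y) = scaleC a x + scaleC a y"
    and scaleC_add_left: "scaleC (a + b) x = scaleC a x + scaleC b x"
    and scaleC_scaleC: "scaleC a (scaleC b x) = scaleC (a * b) x"
    and scaleC_one: "scaleC 1 x = x"
    and scaleC_of_real: "scaleC (complex_of_real r) x = scaleR r x"
    and norm_scaleC: "norm (scaleC a x) = cmod a * norm x"
    and mult_scaleC_left: "scaleC a x * y = scaleC a (x * y)"
    and mult_scaleC_right: "x * scaleC a y = scaleC a (x * y)"
    and star_star: "star (star x) = x"
    and star_add: "star (x + y) = star x + star y"
    and star_scaleC: "star (scaleC a x) = scaleC (cnj a) (star x)"
    and star_mult: "star (x * y) = star y * star x"
    and cstar_identity: "norm (star x * x) = (norm x)\<^sup>2"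

definition csubalg :: "'a::cstar_algebra set \<Rightarrow> bool" where
  "csubalg B \<longleftrightarrow> 1 \<in> B
     \<and> (\<forall>x\<in>B. \<forall>y\<in>B. x + y \<in> B)
     \<and> (\<forall>a. \<forall>x\<in>B. scaleC a x \<in> B)
     \<and> (\<forall>x\<in>B. \<forall>y\<in>B. x * y \<in> B)
     \<and> (\<forall>x\<in>B. star x \<in> B)
     \<and> closed B"

definition commutative_set :: "'a::times set \<Rightarrow> bool" where
  "commutative_set B \<longleftrightarrow> (\<forall>x\<in>B. \<forall>y\<in>B. x * y = y * x)"

definition CC :: "'a::cstar_algebra set \<Rightarrow> 'a set set" where
  "CC B = {C. csubalg C \<and> commutative_set C \<and> C \<subseteq> B}"

definition rmap :: "'a set \<Rightarrow> 'a set \<Rightarrow> 'a set \<Rightarrow> 'a set \<times> 'a set" where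
  "rmap A1 A2 C = (C \<inter> A1, C \<inter> A2)"

definition pair_le :: "'a set \<times> 'a set \<Rightarrow> 'a set \<times> 'a set \<Rightarrow> bool" where
  "pair_le p q \<longleftrightarrow> fst p \<subseteq> fst q \<and> snd p \<subseteq> snd q"

text \<open>r has a left adjoint (posets as categories: Galois connection):
there is l : C(A1) x C(A2) -> C(A) with l p \<subseteq> C iff p \<le> r C.\<close>
definition has_left_adjoint_r :: "'a::cstar_algebra set \<Rightarrow> 'a set \<Rightarrow> bool" where
  "has_left_adjoint_r A1 A2 \<longleftrightarrow>
     (\<exists>l. (\<forall>p \<in> CC A1 \<times> CC A2. l p \<in> CC UNIV)
        \<and> (\<forall>p \<in> CC A1 \<times> CC A2. \<forall>C \<in> CC UNIV. l p \<subseteq> C \<longleftrightarrow> pair_le p (rmap A1 A2 C)))"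

end

theory Submission
  imports Defs
begin
lemma sC0: "scaleC a (0::'a::cstar_algebra) = 0"
  using scaleC_add_right[of a "0::'a" 0] by simp

lemma sCneg: "scaleC a (- (y::'a::cstar_algebra)) = - scaleC a y"
proof -
  have "scaleC a y + scaleC a (-y) = 0" using scaleC_add_right[of a y "-y"] sC0[of a] by (metis add.right_inverse)
  then show ?thesis by (metis add.inverse_unique)
qed

lemma sCdiff: "scaleC a ((x::'a::cstar_algebra) - y) = scaleC a x - scaleC a y"
  by (simp only: diff_conv_add_uminus scaleC_add_right sCneg)

lemma sCnegl: "scaleC (-a) (x::'a::cstar_algebra) = - scaleC a x"
proof -
  have "scaleC a x + scaleC (-a) x = scaleC 0 x" using scaleC_add_left[of a "-a" x] by simp
  also have "\<dots> = 0" using scaleC_of_real[of 0 x] by simp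
  finally show ?thesis by (metis add.inverse_unique)
qed

lemma star0: "star (0::'a::cstar_algebra) = 0"
  using star_add[of "0::'a" 0] by simp

lemma starneg: "star (- (y::'a::cstar_algebra)) = - star y"
proof -
  have "star y + star (-y) = 0" using star_add[of y "-y"] star0 by (metis add.right_inverse)
  then show ?thesis by (metis add.inverse_unique)
qed

lemma stardiff: "star ((x::'a::cstar_algebra) - y) = star x - star y"
  by (simp only: diff_conv_add_uminus star_add starneg)
definition comm :: "'a::cstar_algebra set \<Rightarrow> 'a set" where
  "comm T = {x. \<forall>t\<in>T. x * t = t * x}"

lemma comm_csubalg:
  fixes T :: "'a::cstar_algebra set"
  assumes st: "\<forall>t\<in>T. star t \<in> T"
  shows "csubalg (comm T)"
  unfolding csubalg_def
proof (intro conjI ballI allI)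
  show "1 \<in> comm T" by (simp add: comm_def)
next
  fix x y assume "x \<in> comm T" "y \<in> comm T"
  then show "x + y \<in> comm T" by (simp add: comm_def distrib_left distrib_right)
next
  fix a x assume "x \<in> comm T"
  then show "scaleC a x \<in> comm T" by (simp add: comm_def mult_scaleC_left mult_scaleC_right)
next
  fix x y assume "x \<in> comm T" "y \<in> comm T"
  then show "x * y \<in> comm T" by (simp add: comm_def mult.assoc) (metis mult.assoc)
next
  fix x assume x: "x \<in> comm T"
  show "star x \<in> comm T" unfolding comm_def
  proof (intro CollectI ballI)
    fix t assume t: "t \<in> T"
    have "x * star t = star t * x" using x st t by (simp add: comm_def)
    then have "star (star t * x) = star (x * star t)" by simp
    then show "star x * t = t * star x" by (simp add: star_mult star_star)
  qed
next
  have "comm T = (\<Inter>t\<in>T. {x. x * t - t * x = 0})" by (auto simp: comm_def)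
  moreover have "closed {x. x * t - t * x = 0}" for t :: 'a
    by (intro closed_Collect_eq continuous_intros)
  ultimately show "closed (comm T)" by auto
qed

lemma dcomm:
  fixes T :: "'a::cstar_algebra set"
  assumes st: "\<forall>t\<in>T. star t \<in> T" and c: "commutative_set T"
  shows "comm (comm T) \<in> CC UNIV" "T \<subseteq> comm (comm T)"
proof -
  have TT: "T \<subseteq> comm T" using c by (auto simp: comm_def commutative_set_def)
  have st2: "\<forall>t\<in>comm T. star t \<in> comm T" using comm_csubalg[OF st] by (simp add: csubalg_def)
  have sub: "comm (comm T) \<subseteq> comm T" using TT by (auto simp: comm_def)
  have "commutative_set (comm (comm T))"
    unfolding commutative_set_def
  proof (intro ballI)
    fix x y assume x: "x \<in> comm (comm T)" and y: "y \<in> comm (comm T)"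
    then have "y \<in> comm T" using sub by blast
    then show "x * y = y * x" using x unfolding comm_def by blast
  qed
  then show "comm (comm T) \<in> CC UNIV" using comm_csubalg[OF st2] by (simp add: CC_def)
  show "T \<subseteq> comm (comm T)" by (auto simp: comm_def)
qed

lemma csubalg_Int: "csubalg A \<Longrightarrow> csubalg B \<Longrightarrow> csubalg (A \<inter> B)"
  by (auto simp: csubalg_def)

lemma csubalg_Inter: "F \<noteq> {} \<Longrightarrow> \<forall>C\<in>F. csubalg C \<Longrightarrow> csubalg (\<Inter>F)"
  unfolding csubalg_def by (auto intro: closed_Inter)

lemma selfadj_in:
  fixes x :: "'a::cstar_algebra"
  assumes A: "csubalg A1" and x: "x \<in> A1" and s: "star x = x"
  shows "comm (comm {x}) \<inter> A1 \<in> CC A1" "x \<in> comm (comm {x}) \<inter> A1"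
proof -
  have st: "\<forall>t\<in>{x}. star t \<in> {x}" using s by simp
  have c: "commutative_set {x}" by (simp add: commutative_set_def)
  note d = dcomm[OF st c]
  show "comm (comm {x}) \<inter> A1 \<in> CC A1" using d(1) A
    by (auto simp: CC_def commutative_set_def intro: csubalg_Int)
  show "x \<in> comm (comm {x}) \<inter> A1" using d(2) x by auto
qed

lemma decomp:
  fixes x :: "'a::cstar_algebra"
  defines "h \<equiv> scaleC (1/2) (x + star x)" and "k \<equiv> scaleC (-\<i>/2) (x - star x)"
  shows "x = h + scaleC \<i> k" "star h = h" "star k = k"
proof -
  have "h + scaleC \<i> k = scaleC (1/2) (x + star x) + scaleC (1/2) (x - star x)"
    by (simp add: h_def k_def scaleC_scaleC)
  also have "\<dots> = scaleC (1/2) x + scaleC (1/2) x"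
    by (simp add: scaleC_add_right sCdiff)
  also have "\<dots> = x" by (simp add: scaleC_add_left[symmetric] scaleC_one)
  finally show "x = h + scaleC \<i> k" by simp
  show "star h = h" by (simp add: h_def star_scaleC star_add star_star add.commute)
  have "star k = scaleC (\<i>/2) (star x - x)"
    by (simp add: k_def star_scaleC stardiff star_star)
  also have "\<dots> = scaleC (-\<i>/2) (x - star x)"
    by (simp add: sCdiff sCnegl)
  finally show "star k = k" by (simp add: k_def)
qed

lemma comm_combine:
  fixes h k h' k' :: "'a::cstar_algebra"
  assumes a: "h*h' = h'*h" "h*k' = k'*h" "k*h' = h'*k" "k*k' = k'*k"
  shows "(h + scaleC \<i> k) * (h' + scaleC \<i> k') = (h' + scaleC \<i> k') * (h + scaleC \<i> k)"
proof -
  have L: "(h + scaleC \<i> k) * (h' + scaleC \<i> k') = h*h' + (scaleC \<i> (k*h') + (scaleC \<i> (h*k') + scaleC \<i> (scaleC \<i> (k*k'))))"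
    by (simp only: distrib_left distrib_right mult_scaleC_left mult_scaleC_right scaleC_add_right add.assoc)
  have R: "(h' + scaleC \<i> k') * (h + scaleC \<i> k) = h'*h + (scaleC \<i> (k'*h) + (scaleC \<i> (h'*k) + scaleC \<i> (scaleC \<i> (k'*k))))"
    by (simp only: distrib_left distrib_right mult_scaleC_left mult_scaleC_right scaleC_add_right add.assoc)
  show ?thesis using L R a by (metis add.left_commute)
qed
theorem mainTheorem2:
  fixes A1 A2 :: "'a::cstar_algebra set"
  assumes "csubalg A1" and "csubalg A2"
  shows "(\<forall>x\<in>A1. \<forall>y\<in>A2. x * y = y * x) \<longleftrightarrow> has_left_adjoint_r A1 A2"
proof
  assume com: "\<forall>x\<in>A1. \<forall>y\<in>A2. x * y = y * x"
  define l where "l p = \<Inter>{C \<in> CC (UNIV::'a set). fst p \<union> snd p \<subseteq> C}" for p :: "'a set \<times> 'a set"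
  show "has_left_adjoint_r A1 A2" unfolding has_left_adjoint_r_def
  proof (intro exI[of _ l] conjI ballI)
    fix p assume p: "p \<in> CC A1 \<times> CC A2"
    let ?S = "fst p \<union> snd p"
    have st: "\<forall>t\<in>?S. star t \<in> ?S" using p by (auto simp: CC_def csubalg_def)
    have c: "commutative_set ?S" using p com
      unfolding CC_def commutative_set_def by (auto, metis subsetD)+
    note d = dcomm[OF st c]
    let ?F = "{C \<in> CC UNIV. ?S \<subseteq> C}"
    have F: "comm (comm ?S) \<in> ?F" using d by auto
    have "csubalg (\<Inter>?F)" using F by (intro csubalg_Inter) (auto simp: CC_def)
    moreover have "commutative_set (\<Inter>?F)" using F d(1)
      by (auto simp: CC_def commutative_set_def)
    ultimately show "l p \<in> CC UNIV" by (simp add: l_def CC_def)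
    fix C :: "'a set" assume C: "C \<in> CC UNIV"
    have "l p \<subseteq> C \<longleftrightarrow> ?S \<subseteq> C"
    proof
      assume "l p \<subseteq> C" moreover have "?S \<subseteq> l p" by (auto simp: l_def) ultimately show "?S \<subseteq> C" by blast
    next
      assume "?S \<subseteq> C" then show "l p \<subseteq> C" using C by (auto simp: l_def)
    qed
    also have "\<dots> \<longleftrightarrow> pair_le p (rmap A1 A2 C)" using p
      by (auto simp: pair_le_def rmap_def CC_def)
    finally show "l p \<subseteq> C \<longleftrightarrow> pair_le p (rmap A1 A2 C)" .
  qed
next
  assume "has_left_adjoint_r A1 A2"
  then obtain l where l1: "\<forall>p \<in> CC A1 \<times> CC A2. l p \<in> CC UNIV"
    and l2: "\<forall>p \<in> CC A1 \<times> CC A2. \<forall>C \<in> CC UNIV. l p \<subseteq> C \<longleftrightarrow> pair_le p (rmap A1 A2 C)"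
    unfolding has_left_adjoint_r_def by blast
  have sa: "x * y = y * x" if x: "x \<in> A1" "star x = x" and y: "y \<in> A2" "star y = y" for x y
  proof -
    note X = selfadj_in[OF assms(1) x] and Y = selfadj_in[OF assms(2) y]
    let ?p = "(comm (comm {x}) \<inter> A1, comm (comm {y}) \<inter> A2)"
    have p: "?p \<in> CC A1 \<times> CC A2" using X Y by simp
    have L: "l ?p \<in> CC UNIV" using l1 p by blast
    have "pair_le ?p (rmap A1 A2 (l ?p))" using l2 p L by blast
    then have "x \<in> l ?p" "y \<in> l ?p" using X(2) Y(2) by (auto simp: pair_le_def rmap_def)
    then show ?thesis using L by (auto simp: CC_def commutative_set_def)
  qed
  show "\<forall>x\<in>A1. \<forall>y\<in>A2. x * y = y * x"
  proof (intro ballI)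
    fix x y assume x: "x \<in> A1" and y: "y \<in> A2"
    have mem: "scaleC (1/2) (z + star z) \<in> B" "scaleC (-\<i>/2) (z - star z) \<in> B"
      if "csubalg B" "z \<in> B" for B and z :: 'a
    proof -
      have "star z \<in> B" "scaleC (-1) (star z) \<in> B" using that by (auto simp: csubalg_def)
      moreover have "z - star z = z + scaleC (-1) (star z)"
        using scaleC_of_real[of "-1" "star z"] by simp
      ultimately have "z - star z \<in> B" "z + star z \<in> B"
        using that unfolding csubalg_def by metis+
      then show "scaleC (1/2) (z + star z) \<in> B" "scaleC (-\<i>/2) (z - star z) \<in> B"
        using that unfolding csubalg_def by blast+
    qed
    define hx where "hx = scaleC (1/2) (x + star x)"
    define kx where "kx = scaleC (-\<i>/2) (x - star x)"
    define hy where "hy = scaleC (1/2) (y + star y)"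
    define ky where "ky = scaleC (-\<i>/2) (y - star y)"
    have dx: "x = hx + scaleC \<i> kx" "star hx = hx" "star kx = kx"
      using decomp[of x] unfolding hx_def kx_def by blast+
    have dy: "y = hy + scaleC \<i> ky" "star hy = hy" "star ky = ky"
      using decomp[of y] unfolding hy_def ky_def by blast+
    have mx: "hx \<in> A1" "kx \<in> A1" using mem[OF assms(1) x] unfolding hx_def kx_def by blast+
    have my: "hy \<in> A2" "ky \<in> A2" using mem[OF assms(2) y] unfolding hy_def ky_def by blast+
    have "(hx + scaleC \<i> kx) * (hy + scaleC \<i> ky) = (hy + scaleC \<i> ky) * (hx + scaleC \<i> kx)"
      by (rule comm_combine) (use sa mx my dx dy in blast)+
    then show "x * y = y * x" using dx(1) dy(1) by simp
  qed
qed

end
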